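(* Let $n\ge r\ge 1$ and let $Q=(q_{ij})\in\mathcal P_r(n)$. Then \[ \sum_{1\le i<j\le n}\min(q_{ij},0)\ \ge\ -\frac{\beta_r\, n}{4}. \]
   Context: For integers $N\ge r\ge 1$, let $\mathcal P_r(N)=\{Q\in\mathbb R^{N\times N}: Q^2=Q,\ Q^T=Q,\ \operatorname{rank}Q=r\}$ be the set of rank-$r$ orthogonal projections. Define \[ \beta_r(N)=\frac1N\max_{Q\in\mathcal P_r(N)}\sum_{i,j=1}^N |q_{ij}|,\qquad \beta_r=\sup_{N\ge r}\beta_r(N), \] where $Q=(q_{ij})$. *)

theory Defs
  imports Complex_Main "Jordan_Normal_Form.DL_Rank"
begin

definition proj_set :: "nat \<Rightarrow> nat \<Rightarrow> real mat set" where
  "proj_set r N = {Q. Q \<in> carrier_mat N N \<and> Q * Q = Q \<and> transpose_mat Q = Q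
                      \<and> vec_space.rank N Q = r}"

text \<open>beta_r(N) = (1/N) max over Q in P_r(N) of sum_{i,j} |q_ij|; the maximum is attained
  (compact set), so it equals the supremum used here.\<close>
definition beta_N :: "nat \<Rightarrow> nat \<Rightarrow> real" where
  "beta_N r N = (1 / real N) * Sup ((\<lambda>Q. \<Sum>i<N. \<Sum>j<N. \<bar>Q $$ (i, j)\<bar>) ` proj_set r N)"

definition beta :: "nat \<Rightarrow> real" where
  "beta r = Sup (beta_N r ` {N. r \<le> N})"

end

theory Submission
  imports Defs
begin

lemma proj_trace:
  fixes Q :: "real mat"
  assumes Qc: "Q \<in> carrier_mat n n" and QQ: "Q * Q = Q" and rk: "vec_space.rank n Q = r"
  shows "(\<Sum>i<n. Q $$ (i,i)) = real r"
proof -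
  interpret vec_space "TYPE(real)" n .
  obtain S where max: "maximal S (\<lambda>T. T \<subseteq> set (cols Q) \<and> lin_indpt T)"
    using maximal_exists[of "(\<lambda>T. T \<subseteq> set (cols Q) \<and> lin_indpt T)" "card (set (cols Q))" "{}"]
    by (meson List.finite_set card_mono empty_iff empty_subsetI finite_lin_indpt2 rev_finite_subset)
  have SQ: "S \<subseteq> set (cols Q)" and Sli: "lin_indpt S" using max unfolding maximal_def by auto
  have finS: "finite S" using SQ finite_subset by blast
  have cardS: "card S = r" using rank_card_indpt[OF Qc max] rk by simp
  have Scar: "S \<subseteq> carrier_vec n" using SQ cols_dim Qc by (metis carrier_matD(1) subset_trans)
  obtain ss where ss: "set ss = S" "distinct ss" using finite_distinct_list[OF finS] by blast
  have lss: "length ss = r" using ss cardS distinct_card by fastforce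
  define B where "B = mat_of_cols n ss"
  have Bc: "B \<in> carrier_mat n r" unfolding B_def using lss by auto
  have colsB: "cols B = ss" unfolding B_def using ss Scar by (simp add: cols_mat_of_cols)
  have inspan: "col Q j \<in> span S" if j: "j < n" for j
  proof (cases "col Q j \<in> S")
    case True then show ?thesis using span_mem Scar by auto
  next
    case False
    have cQ: "col Q j \<in> set (cols Q)" using j Qc by (simp add: cols_def)
    have "\<not> lin_indpt (S \<union> {col Q j})"
    proof
      assume "lin_indpt (S \<union> {col Q j})"
      then have "S \<union> {col Q j} = S" using max cQ SQ unfolding maximal_def by blast
      then show False using False by auto
    qed
    then show ?thesis using lin_dep_iff_in_span[OF Scar Sli _ False] cQ Qc by auto
  qed
  have "\<exists>c. c \<in> carrier_vec r \<and> B *\<^sub>v c = col Q j" if j: "j < n" for j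
  proof -
    obtain a where a: "lincomb a S = col Q j" using finite_in_span[OF finS Scar inspan[OF j]] by auto
    have "B *\<^sub>v vec r (\<lambda>i. a (col B i)) = lincomb a (set (cols B))"
      using mat_mult_eq_lincomb[OF Bc] colsB ss by simp
    then show ?thesis using a colsB ss by (intro exI[of _ "vec r (\<lambda>i. a (col B i))"]) auto
  qed
  then obtain cf where cf: "\<And>j. j < n \<Longrightarrow> cf j \<in> carrier_vec r \<and> B *\<^sub>v cf j = col Q j" by metis
  define C where "C = mat r n (\<lambda>(k,j). cf j $ k)"
  have Cc: "C \<in> carrier_mat r n" unfolding C_def by auto
  have colC: "col C j = cf j" if "j < n" for j
    using cf[OF that] that unfolding C_def by (auto simp: col_mat)
  have BC: "B * C = Q"
  proof (rule eq_matI)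
    fix i j assume i: "i < dim_row Q" and j: "j < dim_col Q"
    have "(B * C) $$ (i,j) = row B i \<bullet> col C j" using i j Bc Cc Qc by auto
    also have "\<dots> = (B *\<^sub>v cf j) $ i" using colC j i Bc Qc by auto
    also have "\<dots> = Q $$ (i,j)" using cf j i Qc by auto
    finally show "(B * C) $$ (i,j) = Q $$ (i,j)" .
  qed (use Bc Cc Qc in auto)
  have inj: "v = 0\<^sub>v r" if "v \<in> carrier_vec r" "B *\<^sub>v v = 0\<^sub>v n" for v
  proof (rule ccontr)
    assume "v \<noteq> 0\<^sub>v r"
    then have "lin_dep (set (cols B))" using lin_depI[OF Bc that(1) _ that(2)] colsB ss by auto
    then show False using Sli colsB ss by auto
  qed
  have QB: "Q * B = B"
  proof -
    have "col (Q * B) k = col B k" if k: "k < r" for k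
    proof -
      have "col B k \<in> set (cols Q)" using colsB ss SQ k lss Bc by (metis cols_length cols_nth carrier_matD(2) nth_mem subsetD)
      then obtain p where p: "p < n" "col B k = col Q p" using Qc by (metis cols_length cols_nth carrier_matD(2) in_set_conv_nth)
      have "col (Q * B) k = Q *\<^sub>v col B k" using k Bc Qc by auto
      also have "\<dots> = col (Q * Q) p" using p Qc by auto
      finally show ?thesis using QQ p by simp
    qed
    then show ?thesis using Qc Bc by (intro mat_col_eqI) auto
  qed
  have CB: "C * B = 1\<^sub>m r"
  proof -
    have "col (C * B) k = col (1\<^sub>m r) k" if k: "k < r" for k
    proof -
      have "B *\<^sub>v (col (C * B) k - unit_vec r k) = B *\<^sub>v col (C * B) k - B *\<^sub>v unit_vec r k"
        using Bc Cc k by (intro mult_minus_distrib_mat_vec) auto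
      also have "B *\<^sub>v col (C * B) k = col (B * (C * B)) k" using Bc Cc k by auto
      also have "B * (C * B) = Q * B" using BC Bc Cc by (simp add: assoc_mult_mat[symmetric, OF Bc Cc Bc])
      also have "B *\<^sub>v unit_vec r k = col B k" using Bc k by auto
      finally have "B *\<^sub>v (col (C * B) k - unit_vec r k) = 0\<^sub>v n" using QB Bc k by auto
      then have "col (C * B) k - unit_vec r k = 0\<^sub>v r" using Bc Cc k by (intro inj) auto
      note eq = this
      have x: "col (C*B) k \<in> carrier_vec r" using Cc unfolding carrier_vec_def by simp
      show ?thesis
      proof (rule eq_vecI)
        fix i assume "i < dim_vec (col (1\<^sub>m r) k)"
        then have i: "i < r" using k by simp
        have "(col (C * B) k - unit_vec r k) $ i = 0" using eq i by simp
        then show "col (C * B) k $ i = col (1\<^sub>m r) k $ i" using i k x by simp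
      qed (use x k Cc in simp)
    qed
    then show ?thesis using Cc Bc by (intro mat_col_eqI) auto
  qed
  have "(\<Sum>i<n. Q $$ (i,i)) = (\<Sum>i<n. \<Sum>k<r. B $$ (i,k) * C $$ (k,i))"
    using BC Bc Cc by (auto simp: scalar_prod_def intro!: sum.cong simp flip: BC)
  also have "\<dots> = (\<Sum>k<r. \<Sum>i<n. C $$ (k,i) * B $$ (i,k))" by (subst sum.swap) (simp add: mult.commute)
  also have "\<dots> = (\<Sum>k<r. (C * B) $$ (k,k))" 
    using Bc Cc by (auto simp: scalar_prod_def intro!: sum.cong)
  also have "\<dots> = real r" using CB by simp
  finally show ?thesis .
qed

lemma sym_sum_split:
  fixes f :: "nat \<Rightarrow> nat \<Rightarrow> real"
  assumes sym: "\<And>i j. f i j = f j i" and diag: "\<And>i. f i i = 0"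
  shows "(\<Sum>i<n. \<Sum>j<n. f i j) = 2 * (\<Sum>i<n. \<Sum>j\<in>{i<..<n}. f i j)"
proof (induction n)
  case 0 then show ?case by simp
next
  case (Suc n)
  have e: "{i<..<Suc n} = insert n {i<..<n}" if "i < n" for i using that by auto
  have em: "{n<..<Suc n} = {}" by auto
  have "(\<Sum>i<Suc n. \<Sum>j\<in>{i<..<Suc n}. f i j) = (\<Sum>i<n. \<Sum>j\<in>{i<..<Suc n}. f i j)"
    by (simp add: em)
  also have "\<dots> = (\<Sum>i<n. f i n + (\<Sum>j\<in>{i<..<n}. f i j))"
    by (intro sum.cong) (auto simp: e)
  finally have A: "(\<Sum>i<Suc n. \<Sum>j\<in>{i<..<Suc n}. f i j) = (\<Sum>i<n. f i n) + (\<Sum>i<n. \<Sum>j\<in>{i<..<n}. f i j)"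
    by (simp add: sum.distrib)
  have B: "(\<Sum>i<Suc n. \<Sum>j<Suc n. f i j) = (\<Sum>i<n. \<Sum>j<n. f i j) + (\<Sum>i<n. f i n) + (\<Sum>j<n. f n j) + f n n"
    by (simp add: sum.distrib)
  have C: "(\<Sum>j<n. f n j) = (\<Sum>i<n. f i n)" using sym by simp
  show ?case using A B C Suc.IH diag by simp
qed

lemma proj_diag:
  fixes Q :: "real mat"
  assumes Q: "Q \<in> proj_set r N" and i: "i < N"
  shows "Q $$ (i,i) = (\<Sum>k<N. (Q $$ (i,k))^2)"
proof -
  have Qc: "Q \<in> carrier_mat N N" and QQ: "Q * Q = Q" and QT: "transpose_mat Q = Q"
    using Q unfolding proj_set_def by auto
  have s: "Q $$ (k,i) = Q $$ (i,k)" if "k < N" for k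
    using that i Qc QT by (metis carrier_matD index_transpose_mat(1))
  have "Q $$ (i,i) = (Q * Q) $$ (i,i)" using QQ by simp
  also have "\<dots> = (\<Sum>k<N. Q $$ (i,k) * Q $$ (k,i))"
    using i Qc by (auto simp: scalar_prod_def lessThan_atLeast0 intro!: sum.cong)
  also have "\<dots> = (\<Sum>k<N. (Q $$ (i,k))^2)" using s by (auto simp: power2_eq_square intro!: sum.cong)
  finally show ?thesis .
qed

lemma proj_total_nonneg:
  fixes Q :: "real mat"
  assumes Q: "Q \<in> proj_set r N"
  shows "0 \<le> (\<Sum>i<N. \<Sum>j<N. Q $$ (i,j))"
proof -
  have Qc: "Q \<in> carrier_mat N N" and QQ: "Q * Q = Q" and QT: "transpose_mat Q = Q"
    using Q unfolding proj_set_def by auto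
  have s: "Q $$ (k,i) = Q $$ (i,k)" if "k < N" "i < N" for k i
    using that Qc QT by (metis carrier_matD index_transpose_mat(1))
  have "(\<Sum>i<N. \<Sum>j<N. Q $$ (i,j)) = (\<Sum>i<N. \<Sum>j<N. (Q * Q) $$ (i,j))" using QQ by simp
  also have "\<dots> = (\<Sum>i<N. \<Sum>j<N. \<Sum>k<N. Q $$ (k,i) * Q $$ (k,j))"
    using Qc s by (auto simp: scalar_prod_def lessThan_atLeast0 intro!: sum.cong)
  also have "\<dots> = (\<Sum>i<N. \<Sum>k<N. \<Sum>j<N. Q $$ (k,i) * Q $$ (k,j))"
    by (rule sum.cong[OF refl], rule sum.swap)
  also have "\<dots> = (\<Sum>k<N. \<Sum>i<N. \<Sum>j<N. Q $$ (k,i) * Q $$ (k,j))"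
    by (rule sum.swap)
  also have "\<dots> = (\<Sum>k<N. (\<Sum>i<N. Q $$ (k,i))^2)"
    by (simp add: power2_eq_square sum_product)
  also have "\<dots> \<ge> 0" by (intro sum_nonneg) simp
  finally show ?thesis .
qed

lemma proj_abs_bound:
  fixes Q :: "real mat"
  assumes Q: "Q \<in> proj_set r N" and N: "N > 0"
  shows "(\<Sum>i<N. \<Sum>j<N. \<bar>Q $$ (i,j)\<bar>) \<le> real N * (1 + real r) / 2"
proof -
  have Qc: "Q \<in> carrier_mat N N" and QQ: "Q * Q = Q" and rk: "vec_space.rank N Q = r"
    using Q unfolding proj_set_def by auto
  have tr: "(\<Sum>i<N. Q $$ (i,i)) = real r" using proj_trace[OF Qc QQ rk] .
  have ab: "\<bar>x\<bar> \<le> (1 / real N + real N * x^2) / 2" for x :: real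
  proof -
    have "0 \<le> (real N * \<bar>x\<bar> - 1)^2" by simp
    then have "2 * real N * \<bar>x\<bar> \<le> 1 + (real N)^2 * x^2" by (simp add: power2_eq_square algebra_simps)
    then show ?thesis using N by (simp add: field_simps power2_eq_square)
  qed
  have "(\<Sum>i<N. \<Sum>j<N. \<bar>Q $$ (i,j)\<bar>) \<le> (\<Sum>i<N. \<Sum>j<N. (1 / real N + real N * (Q $$ (i,j))^2) / 2)"
    by (intro sum_mono ab)
  also have "\<dots> = (\<Sum>i<N. (1 + real N * (\<Sum>j<N. (Q $$ (i,j))^2)) / 2)"
    using N by (simp add: sum.distrib sum_divide_distrib[symmetric] sum_distrib_left)
  also have "\<dots> = (\<Sum>i<N. (1 + real N * Q $$ (i,i)) / 2)"
    using proj_diag[OF Q] by simp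
  also have "\<dots> = (real N + real N * (\<Sum>i<N. Q $$ (i,i))) / 2"
    by (simp add: sum.distrib sum_divide_distrib[symmetric] sum_distrib_left)
  also have "\<dots> = real N * (1 + real r) / 2" using tr by (simp add: algebra_simps)
  finally show ?thesis .
qed

lemma bdd_image_N:
  assumes N: "N > 0"
  shows "bdd_above ((\<lambda>Q. \<Sum>i<N. \<Sum>j<N. \<bar>Q $$ (i, j)\<bar>) ` proj_set r N)"
  using proj_abs_bound[OF _ N] by (intro bdd_aboveI[where M = "real N * (1 + real r) / 2"]) auto

lemma beta_N_bound:
  assumes N: "N > 0"
  shows "beta_N r N \<le> max ((1 + real r) / 2) \<bar>Sup ({}::real set)\<bar>"
proof (cases "proj_set r N = {}")
  case True
  have "beta_N r N = Sup ({}::real set) / real N" unfolding beta_N_def True by simp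
  also have "\<dots> \<le> \<bar>Sup ({}::real set)\<bar> / real N" using N by (intro divide_right_mono) auto
  also have "\<dots> \<le> \<bar>Sup ({}::real set)\<bar> / 1" using N by (intro divide_left_mono) auto
  finally show ?thesis by simp
next
  case False
  have "Sup ((\<lambda>Q. \<Sum>i<N. \<Sum>j<N. \<bar>Q $$ (i, j)\<bar>) ` proj_set r N) \<le> real N * (1 + real r) / 2"
    using False proj_abs_bound[OF _ N] by (intro cSup_least) auto
  then have "beta_N r N \<le> (1 / real N) * (real N * (1 + real r) / 2)"
    unfolding beta_N_def using N by (intro mult_left_mono) auto
  also have "\<dots> = (1 + real r) / 2" using N by simp
  finally show ?thesis by linarith
qed

theorem mainTheorem2:
  fixes n r :: nat and Q :: "real mat"
  assumes "1 \<le> r" and "r \<le> n" and "Q \<in> proj_set r n"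
  shows "(\<Sum>i<n. \<Sum>j\<in>{i<..<n}. min (Q $$ (i, j)) 0) \<ge> - (beta r * real n / 4)"
proof -
  have n: "n > 0" using assms by simp
  have Qc: "Q \<in> carrier_mat n n" and QT: "transpose_mat Q = Q"
    using assms(3) unfolding proj_set_def by auto
  have s: "Q $$ (j,i) = Q $$ (i,j)" if "j < n" "i < n" for i j
    using that Qc QT by (metis carrier_matD index_transpose_mat(1))
  define X where "X = (\<Sum>i<n. \<Sum>j<n. \<bar>Q $$ (i,j)\<bar>)"
  have "X \<le> Sup ((\<lambda>Q. \<Sum>i<n. \<Sum>j<n. \<bar>Q $$ (i, j)\<bar>) ` proj_set r n)"
    unfolding X_def using assms(3) bdd_image_N[OF n] by (intro cSup_upper) auto
  then have "X / real n \<le> beta_N r n" unfolding beta_N_def using n by (simp add: divide_right_mono)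
  also have "beta_N r n \<le> beta r"
    unfolding beta_def
  proof (rule cSup_upper)
    show "beta_N r n \<in> beta_N r ` {N. r \<le> N}" using assms by auto
    show "bdd_above (beta_N r ` {N. r \<le> N})"
      using beta_N_bound assms(1)
      by (intro bdd_aboveI[where M = "max ((1 + real r) / 2) \<bar>Sup ({}::real set)\<bar>"]) auto
  qed
  finally have Xb: "X \<le> beta r * real n" using n by (simp add: field_simps)
  define f where "f i j = (if i < n \<and> j < n then min (Q $$ (i, j)) 0 else 0)" for i j
  have fsym: "f i j = f j i" for i j unfolding f_def using s by auto
  have fdiag: "f i i = 0" for i
  proof -
    have "Q $$ (i,i) \<ge> 0" if "i < n" using proj_diag[OF assms(3) that] by (simp add: sum_nonneg)
    then show ?thesis unfolding f_def by auto
  qed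
  have "(\<Sum>i<n. \<Sum>j<n. f i j) = 2 * (\<Sum>i<n. \<Sum>j\<in>{i<..<n}. f i j)"
    by (rule sym_sum_split[OF fsym fdiag])
  also have "(\<Sum>i<n. \<Sum>j\<in>{i<..<n}. f i j) = (\<Sum>i<n. \<Sum>j\<in>{i<..<n}. min (Q $$ (i, j)) 0)"
    unfolding f_def by (intro sum.cong) auto
  finally have E: "(\<Sum>i<n. \<Sum>j<n. f i j) = 2 * (\<Sum>i<n. \<Sum>j\<in>{i<..<n}. min (Q $$ (i, j)) 0)" .
  have "(\<Sum>i<n. \<Sum>j<n. f i j) = (\<Sum>i<n. \<Sum>j<n. (Q $$ (i,j) - \<bar>Q $$ (i,j)\<bar>) / 2)"
    unfolding f_def by (intro sum.cong) (auto simp: min_def)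
  also have "\<dots> = ((\<Sum>i<n. \<Sum>j<n. Q $$ (i,j)) - X) / 2"
    unfolding X_def by (simp add: sum_subtractf sum_divide_distrib[symmetric])
  finally have "(\<Sum>i<n. \<Sum>j<n. f i j) \<ge> - X / 2" using proj_total_nonneg[OF assms(3)] by simp
  then show ?thesis using E Xb by linarith
qed

end
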